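(* Let $\lambda>0$ and let $f\in\mathcal B_\lambda$ be bounded and non-constant. Let $\omega$ be the positive measure on $[0,\infty)$ with $t^{-\lambda}f(t)=\int_0^\infty e^{-ts}\,d\omega(s)$ for $t>0$, and write $\mathcal L(\omega)(x)=\int_0^\infty e^{-xs}\,d\omega(s)$. (i) If $\lambda\le 1$, then for all $x,y>0$, $$y^{y}\frac{\Gamma(\lambda+y)}{\Gamma(y)}\int_0^\infty\frac{d\omega(s)}{(y+xs)^{\lambda+y}}<\mathcal L(\omega)(x).$$ (ii) If $\lambda>1$, then for all $x,y>0$, $$y^{\lambda+y}\int_0^\infty\frac{d\omega(s)}{(y+xs)^{\lambda+y}}<\mathcal L(\omega)(x).$$
   Context: For $\lambda>0$, $\mathcal B_\lambda$ is the class of non-negative functions $f$ on $(0,\infty)$ having derivatives of all orders such that $f'(x)x^{1-\lambda}$ is completely monotonic. For any $f\in\mathcal B_\lambda$ the function $t\mapsto t^{-\lambda}f(t)$ is completely monotonic, so by Bernstein's theorem it is the Laplace transform of a unique positive measure $\omega$ on $[0,\infty)$. *)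

theory Defs
  imports "HOL-Analysis.Analysis"
begin

definition smooth_pos :: "(real \<Rightarrow> real) \<Rightarrow> bool" where
  "smooth_pos g \<longleftrightarrow> (\<forall>n. \<forall>x>0. (deriv ^^ n) g differentiable (at x))"

definition completely_monotonic :: "(real \<Rightarrow> real) \<Rightarrow> bool" where
  "completely_monotonic g \<longleftrightarrow> smooth_pos g \<and>
     (\<forall>n. \<forall>x>0. (-1) ^ n * (deriv ^^ n) g x \<ge> 0)"

definition class_B :: "real \<Rightarrow> (real \<Rightarrow> real) \<Rightarrow> bool" where
  "class_B lam f \<longleftrightarrow> (\<forall>x>0. f x \<ge> 0) \<and> smooth_pos f \<and>
     completely_monotonic (\<lambda>x. deriv f x * x powr (1 - lam))"

end

theory Submission
  imports Defs
begin
lemma gamma_scaled: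
  fixes a b :: real
  assumes a: "a > 0" and b: "b > 0"
  shows "(\<integral>\<^sup>+u. ennreal (indicator {0<..} u * u powr (a - 1) * exp (- (b * u))) \<partial>lborel)
         = ennreal (Gamma a / b powr a)"
proof -
  define G where "G = (\<lambda>t::real. ennreal (indicator {0..} t * t powr (a - 1) / exp t))"
  have G_meas[measurable]: "G \<in> borel_measurable borel" unfolding G_def by measurable
  have "ennreal (Gamma a) = (\<integral>\<^sup>+t. G t \<partial>lborel)"
    using Gamma_conv_nn_integral_real[OF a] by (simp add: G_def)
  also have "lborel = density (distr lborel borel ((*) b)) (\<lambda>_. \<bar>b\<bar>)"
    using b by (intro lborel_distr_mult') auto
  also have "(\<integral>\<^sup>+t. G t \<partial>density (distr lborel borel ((*) b)) (\<lambda>_. \<bar>b\<bar>))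
      = (\<integral>\<^sup>+t. ennreal b * G t \<partial>distr lborel borel ((*) b))"
    using b by (subst nn_integral_density) auto
  also have "\<dots> = (\<integral>\<^sup>+u. ennreal b * G (b * u) \<partial>lborel)"
    by (subst nn_integral_distr) auto
  also have "\<dots> = (\<integral>\<^sup>+u. ennreal (b * b powr (a - 1)) * ennreal (indicator {0<..} u * u powr (a - 1) * exp (- (b * u))) \<partial>lborel)"
  proof (intro nn_integral_cong)
    fix u :: real
    show "ennreal b * G (b * u) = ennreal (b * b powr (a - 1)) * ennreal (indicator {0<..} u * u powr (a - 1) * exp (- (b * u)))"
    proof (cases "u > 0")
      case True
      then show ?thesis using b
        by (simp add: G_def indicator_def ennreal_mult'[symmetric] powr_mult exp_minus divide_simps mult_ac
                      zero_le_mult_iff)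
    next
      case False
      then show ?thesis using b by (auto simp: G_def indicator_def zero_le_mult_iff)
    qed
  qed
  also have "\<dots> = ennreal (b * b powr (a - 1)) * (\<integral>\<^sup>+u. ennreal (indicator {0<..} u * u powr (a - 1) * exp (- (b * u))) \<partial>lborel)"
    by (subst nn_integral_cmult) auto
  finally have eq: "ennreal (Gamma a) = ennreal (b powr a) * (\<integral>\<^sup>+u. ennreal (indicator {0<..} u * u powr (a - 1) * exp (- (b * u))) \<partial>lborel)"
    using b by (simp add: powr_diff divide_simps)
  have bp: "b powr a > 0" using b by simp
  have "ennreal (Gamma a / b powr a) = ennreal (Gamma a) * ennreal (1 / b powr a)"
    using bp Gamma_real_pos[OF a] by (simp add: ennreal_mult'[symmetric])
  also have "\<dots> = (ennreal (1 / b powr a) * ennreal (b powr a)) * (\<integral>\<^sup>+u. ennreal (indicator {0<..} u * u powr (a - 1) * exp (- (b * u))) \<partial>lborel)"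
    unfolding eq by (simp only: mult_ac)
  also have "ennreal (1 / b powr a) * ennreal (b powr a) = 1"
    using bp by (simp add: ennreal_mult'[symmetric])
  finally show ?thesis by simp
qed

lemma omega_sigma_finite:
  fixes \<omega> :: "real measure"
  assumes sets: "sets \<omega> = sets borel"
    and fin: "(\<integral>\<^sup>+s. ennreal (exp (- 1 * s)) \<partial>\<omega>) < \<infinity>"
  shows "sigma_finite_measure \<omega>"
proof
  have sp: "space \<omega> = UNIV" using sets_eq_imp_space_eq[OF sets] by simp
  show "\<exists>A::real set set. countable A \<and> A \<subseteq> sets \<omega> \<and> (\<Union>A) = space \<omega> \<and> (\<forall>a\<in>A. emeasure \<omega> a \<noteq> \<infinity>)"
  proof (intro exI[of _ "range (\<lambda>n::nat. {- real n..real n})"] conjI ballI)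
    show "countable (range (\<lambda>n::nat. {- real n..real n}))" by simp
    show "range (\<lambda>n::nat. {- real n..real n}) \<subseteq> sets \<omega>" unfolding sets by (simp add: image_subset_iff)
    show "\<Union> (range (\<lambda>n::nat. {- real n..real n})) = space \<omega>"
    proof -
      have "x \<in> (\<Union>n. {- real n..real n})" for x :: real
      proof -
        obtain n :: nat where "\<bar>x\<bar> \<le> real n" using real_arch_simple by blast
        then show ?thesis by (auto intro!: exI[of _ n])
      qed
      then show ?thesis using sp by auto
    qed
    fix A assume "A \<in> range (\<lambda>n::nat. {- real n..real n})"
    then obtain n :: nat where A: "A = {- real n..real n}" by auto
    have "emeasure \<omega> A = (\<integral>\<^sup>+s. indicator A s \<partial>\<omega>)"
      using sets A by (subst nn_integral_indicator) auto
    also have "\<dots> \<le> (\<integral>\<^sup>+s. ennreal (exp (real n)) * ennreal (exp (- 1 * s)) \<partial>\<omega>)"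
    proof (intro nn_integral_mono)
      fix s :: real
      show "indicator A s \<le> ennreal (exp (real n)) * ennreal (exp (- 1 * s))"
      proof (cases "s \<in> A")
        case True
        then have "s \<le> real n" using A by auto
        then have "1 \<le> exp (real n) * exp (- 1 * s)"
          by (simp add: exp_minus field_simps)
        then show ?thesis using True by (simp add: ennreal_mult'[symmetric])
      qed simp
    qed
    also have "\<dots> = ennreal (exp (real n)) * (\<integral>\<^sup>+s. ennreal (exp (- 1 * s)) \<partial>\<omega>)"
      by (rule nn_integral_cmult) (simp add: measurable_cong_sets[OF sets refl])
    also have "\<dots> < \<infinity>" using fin by (simp add: ennreal_mult_less_top)
    finally show "emeasure \<omega> A \<noteq> \<infinity>" by simp
  qed
qed

lemma tonelli_step:
  fixes \<omega> :: "real measure" and a b c :: real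
  assumes sets: "sets \<omega> = sets borel"
    and nonneg: "AE s in \<omega>. s \<ge> 0"
    and sf: "sigma_finite_measure \<omega>"
    and a: "a > 0" and b: "b > 0" and c: "c > 0"
  shows "ennreal (Gamma a) * (\<integral>\<^sup>+s. ennreal (1 / (b + c * s) powr a) \<partial>\<omega>)
       = (\<integral>\<^sup>+u. ennreal (indicator {0<..} u * u powr (a - 1) * exp (- (b * u)))
              * (\<integral>\<^sup>+s. ennreal (exp (- (c * u) * s)) \<partial>\<omega>) \<partial>lborel)"
proof -
  define F where "F = (\<lambda>(s::real, u::real). ennreal (indicator {0<..} u * u powr (a - 1) * exp (- ((b + c * s) * u))))"
  have Fm: "F \<in> borel_measurable (\<omega> \<Otimes>\<^sub>M lborel)"
  proof -
    have "F \<in> borel_measurable (borel \<Otimes>\<^sub>M lborel)" unfolding F_def by measurable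
    moreover have "sets (\<omega> \<Otimes>\<^sub>M lborel) = sets (borel \<Otimes>\<^sub>M lborel)"
      by (rule sets_pair_measure_cong[OF sets refl])
    ultimately show ?thesis using measurable_cong_sets by blast
  qed
  interpret P: pair_sigma_finite \<omega> lborel
    unfolding pair_sigma_finite_def using sf lborel.sigma_finite_measure_axioms by blast
  have mS: "\<And>g::real\<Rightarrow>ennreal. g \<in> borel_measurable borel \<Longrightarrow> g \<in> borel_measurable \<omega>"
    using measurable_cong_sets[OF sets refl] by blast
  have "ennreal (Gamma a) * (\<integral>\<^sup>+s. ennreal (1 / (b + c * s) powr a) \<partial>\<omega>)
      = (\<integral>\<^sup>+s. ennreal (Gamma a) * ennreal (1 / (b + c * s) powr a) \<partial>\<omega>)"
    by (rule nn_integral_cmult[symmetric]) (intro mS, measurable)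
  also have "\<dots> = (\<integral>\<^sup>+s. (\<integral>\<^sup>+u. F (s, u) \<partial>lborel) \<partial>\<omega>)"
  proof (rule nn_integral_cong_AE)
    show "AE s in \<omega>. ennreal (Gamma a) * ennreal (1 / (b + c * s) powr a) = (\<integral>\<^sup>+u. F (s, u) \<partial>lborel)"
      using nonneg
    proof (rule AE_mp, intro AE_I2 impI)
      fix s :: real assume s: "s \<ge> 0"
      have bs: "b + c * s > 0" using b c s by (simp add: add_pos_nonneg)
      have "(\<integral>\<^sup>+u. F (s, u) \<partial>lborel) = ennreal (Gamma a / (b + c * s) powr a)"
        unfolding F_def using gamma_scaled[OF a bs] by simp
      also have "\<dots> = ennreal (Gamma a) * ennreal (1 / (b + c * s) powr a)"
        using Gamma_real_pos[OF a] bs by (simp add: ennreal_mult'[symmetric])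
      finally show "ennreal (Gamma a) * ennreal (1 / (b + c * s) powr a) = (\<integral>\<^sup>+u. F (s, u) \<partial>lborel)" ..
    qed
  qed
  also have "\<dots> = (\<integral>\<^sup>+u. (\<integral>\<^sup>+s. F (s, u) \<partial>\<omega>) \<partial>lborel)"
    using P.Fubini'[of "\<lambda>s u. F (s, u)"] Fm by (simp add: case_prod_eta)
  also have "\<dots> = (\<integral>\<^sup>+u. ennreal (indicator {0<..} u * u powr (a - 1) * exp (- (b * u)))
              * (\<integral>\<^sup>+s. ennreal (exp (- (c * u) * s)) \<partial>\<omega>) \<partial>lborel)"
  proof (rule nn_integral_cong)
    fix u :: real
    have "(\<integral>\<^sup>+s. F (s, u) \<partial>\<omega>) = (\<integral>\<^sup>+s. ennreal (indicator {0<..} u * u powr (a - 1) * exp (- (b * u)))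
              * ennreal (exp (- (c * u) * s)) \<partial>\<omega>)"
    proof (rule nn_integral_cong)
      fix s :: real
      have "exp (- ((b + c * s) * u)) = exp (- (b * u)) * exp (- (c * u) * s)"
        by (simp add: exp_add[symmetric] algebra_simps)
      then show "F (s, u) = ennreal (indicator {0<..} u * u powr (a - 1) * exp (- (b * u))) * ennreal (exp (- (c * u) * s))"
        unfolding F_def by (simp add: ennreal_mult'[symmetric] indicator_def mult_ac)
    qed
    also have "\<dots> = ennreal (indicator {0<..} u * u powr (a - 1) * exp (- (b * u))) * (\<integral>\<^sup>+s. ennreal (exp (- (c * u) * s)) \<partial>\<omega>)"
      by (rule nn_integral_cmult) (intro mS, measurable)
    finally show "(\<integral>\<^sup>+s. F (s, u) \<partial>\<omega>) = ennreal (indicator {0<..} u * u powr (a - 1) * exp (- (b * u))) * (\<integral>\<^sup>+s. ennreal (exp (- (c * u) * s)) \<partial>\<omega>)" .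
  qed
  finally show ?thesis .
qed

lemma peak_left:
  fixes \<phi> \<phi>' :: "real \<Rightarrow> real" and x :: real
  assumes D: "\<And>t. t > 0 \<Longrightarrow> (\<phi> has_real_derivative \<phi>' t) (at t)"
    and L: "\<And>t. 0 < t \<Longrightarrow> t \<le> x \<Longrightarrow> \<phi>' t \<ge> 0"
    and st: "0 < s" "s \<le> t" "t \<le> x"
  shows "\<phi> s \<le> \<phi> t"
proof (rule DERIV_nonneg_imp_nondecreasing[OF \<open>s \<le> t\<close>])
  fix z assume z: "s \<le> z" "z \<le> t"
  then have "z > 0" "z \<le> x" using st by linarith+
  then show "\<exists>y. (\<phi> has_real_derivative y) (at z) \<and> y \<ge> 0" using D L by blast
qed

lemma peak_right:
  fixes \<phi> \<phi>' :: "real \<Rightarrow> real" and x :: real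
  assumes x: "x > 0"
    and D: "\<And>t. t > 0 \<Longrightarrow> (\<phi> has_real_derivative \<phi>' t) (at t)"
    and R: "\<And>t. x \<le> t \<Longrightarrow> \<phi>' t \<le> 0"
    and st: "x \<le> s" "s \<le> t"
  shows "\<phi> t \<le> \<phi> s"
proof (rule DERIV_nonpos_imp_nonincreasing[OF \<open>s \<le> t\<close>])
  fix z assume z: "s \<le> z" "z \<le> t"
  then have "z > 0" "x \<le> z" using st x by linarith+
  then show "\<exists>y. (\<phi> has_real_derivative y) (at z) \<and> y \<le> 0" using D R by blast
qed

lemma peak_max:
  fixes \<phi> \<phi>' :: "real \<Rightarrow> real" and x :: real
  assumes x: "x > 0"
    and D: "\<And>t. t > 0 \<Longrightarrow> (\<phi> has_real_derivative \<phi>' t) (at t)"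
    and L: "\<And>t. 0 < t \<Longrightarrow> t \<le> x \<Longrightarrow> \<phi>' t \<ge> 0"
    and R: "\<And>t. x \<le> t \<Longrightarrow> \<phi>' t \<le> 0"
    and t: "0 < t"
  shows "\<phi> t \<le> \<phi> x"
proof (cases "t \<le> x")
  case True then show ?thesis using peak_left[of \<phi> \<phi>' x t x, OF D L] t by simp
next
  case False then show ?thesis using peak_right[of x \<phi> \<phi>' x t, OF x D R] by simp
qed

lemma strict_set:
  fixes \<phi> :: "real \<Rightarrow> real" and x :: real
  assumes x: "x > 0"
    and l: "\<And>s t. 0 < s \<Longrightarrow> s \<le> t \<Longrightarrow> t \<le> x \<Longrightarrow> \<phi> s \<le> \<phi> t"
    and r: "\<And>s t. x \<le> s \<Longrightarrow> s \<le> t \<Longrightarrow> \<phi> t \<le> \<phi> s"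
    and nc: "\<exists>t0>0. \<phi> t0 \<noteq> \<phi> x"
  shows "\<exists>p q. 0 < p \<and> p < q \<and> (\<forall>u. p \<le> u \<and> u \<le> q \<longrightarrow> \<phi> (x * u) < \<phi> x)"
proof -
  obtain t0 where t0: "t0 > 0" "\<phi> t0 \<noteq> \<phi> x" using nc by blast
  show ?thesis
  proof (cases "t0 < x")
    case True
    then have lt: "\<phi> t0 < \<phi> x" using l[of t0 x] t0 by force
    have p: "0 < t0 / (2 * x)" using t0 x by simp
    have "t0 / (2 * x) = (t0 / x) / 2" by simp
    then have pq: "t0 / (2 * x) < t0 / x" using p by linarith
    have "\<phi> (x * u) < \<phi> x" if u: "t0 / (2 * x) \<le> u" "u \<le> t0 / x" for u
    proof -
      have "0 < u" using u p by linarith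
      then have "0 < x * u" using x by simp
      moreover have "x * u \<le> t0" using u x by (simp add: field_simps)
      ultimately have "\<phi> (x * u) \<le> \<phi> t0" using l[of "x*u" t0] True by simp
      then show "\<phi> (x * u) < \<phi> x" using lt by simp
    qed
    then show ?thesis using p pq by blast
  next
    case False
    then have lt: "\<phi> t0 < \<phi> x" using r[of x t0] t0 by force
    have p: "0 < t0 / x" using t0 x by simp
    have "\<phi> (x * u) < \<phi> x" if u: "t0 / x \<le> u" "u \<le> t0 / x + 1" for u
    proof -
      have "t0 \<le> x * u" using u x by (simp add: field_simps)
      then have "\<phi> (x * u) \<le> \<phi> t0" using r[of t0 "x*u"] False by simp
      then show "\<phi> (x * u) < \<phi> x" using lt by simp
    qed
    then show ?thesis using p by (intro exI[of _ "t0 / x"] exI[of _ "t0 / x + 1"]) auto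
  qed
qed

lemma class_B_facts:
  fixes lam :: real and f :: "real \<Rightarrow> real"
  defines "g \<equiv> (\<lambda>t. deriv f t * t powr (1 - lam))"
  assumes fB: "class_B lam f"
  shows "\<And>t. t > 0 \<Longrightarrow> f t \<ge> 0"
    and "\<And>t. t > 0 \<Longrightarrow> (f has_real_derivative deriv f t) (at t)"
    and "\<And>t. t > 0 \<Longrightarrow> deriv f t = g t * t powr (lam - 1)"
    and "\<And>t. t > 0 \<Longrightarrow> g t \<ge> 0"
    and "\<And>s t. 0 < s \<Longrightarrow> s \<le> t \<Longrightarrow> g t \<le> g s"
proof -
  have f0: "\<forall>x>0. f x \<ge> 0" and sf: "smooth_pos f" and cm: "completely_monotonic g"
    using fB unfolding class_B_def g_def by auto
  show "f t \<ge> 0" if "t > 0" for t using f0 that by auto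
  show Df: "(f has_real_derivative deriv f t) (at t)" if "t > 0" for t
  proof -
    have "f differentiable (at t)" using sf that unfolding smooth_pos_def
      by (metis funpow_0)
    then show ?thesis using DERIV_deriv_iff_real_differentiable by blast
  qed
  show "deriv f t = g t * t powr (lam - 1)" if "t > 0" for t
    using that by (simp add: g_def mult.assoc powr_add[symmetric])
  have sg: "smooth_pos g" and cmg: "\<forall>n. \<forall>x>0. (-1) ^ n * (deriv ^^ n) g x \<ge> 0"
    using cm unfolding completely_monotonic_def by auto
  show "g t \<ge> 0" if "t > 0" for t using cmg[rule_format, where n=0 and x=t] that by simp
  have Dg: "(g has_real_derivative deriv g t) (at t)" if "t > 0" for t
  proof -
    have "g differentiable (at t)" using sg that unfolding smooth_pos_def
      by (metis funpow_0)
    then show ?thesis using DERIV_deriv_iff_real_differentiable by blast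
  qed
  have dg: "deriv g t \<le> 0" if "t > 0" for t using cmg[rule_format, where n=1 and x=t] that by simp
  show "g t \<le> g s" if "0 < s" "s \<le> t" for s t
  proof (rule DERIV_nonpos_imp_nonincreasing[OF \<open>s \<le> t\<close>])
    fix z assume z: "s \<le> z" "z \<le> t"
    then have "z > 0" using that by linarith
    then show "\<exists>y. (g has_real_derivative y) (at z) \<and> y \<le> 0" using Dg dg by blast
  qed
qed

definition gQ :: "real \<Rightarrow> real \<Rightarrow> real" where
  "gQ y u = indicator {0<..} u * u powr (y - 1) * exp (- (y * u))"

lemma gQ_nonneg: "gQ y u \<ge> 0" by (simp add: gQ_def indicator_def)
lemma gQ_pos: "u > 0 \<Longrightarrow> gQ y u > 0" by (simp add: gQ_def)
lemma gQ_zero: "\<not> u > 0 \<Longrightarrow> gQ y u = 0" by (simp add: gQ_def)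
lemma gQ_meas[measurable]: "gQ y \<in> borel_measurable borel"
  unfolding gQ_def[abs_def] by measurable

lemma nn_to_int:
  fixes h :: "real \<Rightarrow> real"
  assumes [measurable]: "h \<in> borel_measurable borel" and nn: "\<And>u. h u \<ge> 0"
    and eq: "(\<integral>\<^sup>+u. ennreal (h u) \<partial>lborel) = ennreal v" and v: "v \<ge> 0"
  shows "integrable lborel h" "integral\<^sup>L lborel h = v"
proof -
  show i: "integrable lborel h"
    by (rule integrableI_nn_integral_finite[OF _ _ eq]) (auto simp: nn)
  have "ennreal (integral\<^sup>L lborel h) = ennreal v"
    using nn_integral_eq_integral[OF i] nn eq by simp
  then show "integral\<^sup>L lborel h = v"
    using v integral_nonneg_AE[of h lborel] nn by (simp add: ennreal_inj)
qed

lemma moment: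
  fixes y r :: real
  assumes y: "y > 0" and yr: "y + r > 0"
  shows "integrable lborel (\<lambda>u. gQ y u * u powr r)"
    "integral\<^sup>L lborel (\<lambda>u. gQ y u * u powr r) = Gamma (y + r) / y powr (y + r)"
proof -
  have cong: "gQ y u * u powr r = indicator {0<..} u * u powr (y + r - 1) * exp (- (y * u))" for u
  proof (cases "u > 0")
    case True then show ?thesis by (simp add: gQ_def powr_add[symmetric] algebra_simps)
  qed (simp add: gQ_def)
  have eq: "(\<integral>\<^sup>+u. ennreal (gQ y u * u powr r) \<partial>lborel) = ennreal (Gamma (y + r) / y powr (y + r))"
    unfolding cong using gamma_scaled[OF yr y] by simp
  have nn: "gQ y u * u powr r \<ge> 0" for u using gQ_nonneg[of y u] by simp
  have v: "Gamma (y + r) / y powr (y + r) \<ge> 0" using Gamma_real_pos[OF yr] by simp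
  show "integrable lborel (\<lambda>u. gQ y u * u powr r)"
    by (rule nn_to_int(1)[OF _ nn eq v]) measurable
  show "integral\<^sup>L lborel (\<lambda>u. gQ y u * u powr r) = Gamma (y + r) / y powr (y + r)"
    by (rule nn_to_int(2)[OF _ nn eq v]) measurable
qed

lemma integral_less_gen:
  fixes X Y :: "'a \<Rightarrow> real"
  assumes int: "integrable M X" "integrable M Y"
  assumes A: "(emeasure M) A \<noteq> 0" "A \<in> sets M" "AE x in M. x \<in> A \<longrightarrow> X x \<noteq> Y x"
  assumes gt: "AE x in M. X x \<le> Y x"
  shows "integral\<^sup>L M X < integral\<^sup>L M Y"
proof -
  have "integral\<^sup>L M X \<le> integral\<^sup>L M Y"
    using gt int by (intro integral_mono_AE) auto
  moreover
  have "integral\<^sup>L M X \<noteq> integral\<^sup>L M Y"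
  proof
    assume eq: "integral\<^sup>L M X = integral\<^sup>L M Y"
    have "integral\<^sup>L M (\<lambda>x. \<bar>Y x - X x\<bar>) = integral\<^sup>L M (\<lambda>x. Y x - X x)"
      using gt int by (intro integral_cong_AE) auto
    also have "\<dots> = 0"
      using eq int by simp
    finally have "(emeasure M) {x \<in> space M. Y x - X x \<noteq> 0} = 0"
      using int by (simp add: integral_0_iff)
    moreover
    have "(\<integral>\<^sup>+x. indicator A x \<partial>M) \<le> (\<integral>\<^sup>+x. indicator {x \<in> space M. Y x - X x \<noteq> 0} x \<partial>M)"
      using A by (intro nn_integral_mono_AE) auto
    then have "(emeasure M) A \<le> (emeasure M) {x \<in> space M. Y x - X x \<noteq> 0}"
      using int A by (simp add: integrable_def)
    ultimately have "emeasure M A = 0"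
      by simp
    with \<open>(emeasure M) A \<noteq> 0\<close> show False by auto
  qed
  ultimately show ?thesis by auto
qed

lemma meas_gQf:
  fixes f :: "real \<Rightarrow> real"
  assumes cont: "continuous_on {0<..} f" and x: "x > 0"
  shows "(\<lambda>u. gQ y u * f (x * u)) \<in> borel_measurable borel"
proof -
  have c1: "continuous_on {0<..} (\<lambda>u. f (x * u))"
    by (rule continuous_on_compose2[OF cont]) (auto intro!: continuous_intros simp: x)
  have "continuous_on {0<..} (\<lambda>u. u powr (y - 1) * exp (- (y * u)) * f (x * u))"
    by (intro continuous_intros c1) auto
  then have "(\<lambda>u. indicator {0<..} u *\<^sub>R (u powr (y - 1) * exp (- (y * u)) * f (x * u))) \<in> borel_measurable borel"
    by (intro borel_measurable_continuous_on_indicator) auto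
  moreover have "(\<lambda>u. indicator {0<..} u *\<^sub>R (u powr (y - 1) * exp (- (y * u)) * f (x * u))) = (\<lambda>u. gQ y u * f (x * u))"
    by (auto simp: gQ_def indicator_def)
  ultimately show ?thesis by simp
qed

lemma gQ_powr0: "gQ y u * u powr 0 = gQ y u"
  by (cases "u > 0") (auto simp: gQ_zero)

lemma gQ_powr1: "gQ y u * u powr 1 = gQ y u * u"
  by (cases "u > 0") (auto simp: gQ_zero)

lemma I_formula:
  fixes \<omega> :: "real measure" and f :: "real \<Rightarrow> real" and lam x y M :: real
  assumes sets: "sets \<omega> = sets borel"
    and nonneg: "AE s in \<omega>. s \<ge> 0"
    and sf: "sigma_finite_measure \<omega>"
    and laplace: "\<And>t. t > 0 \<Longrightarrow>
        ennreal (t powr (- lam) * f t) = (\<integral>\<^sup>+ s. ennreal (exp (- t * s)) \<partial>\<omega>)"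
    and fnn: "\<And>t. t > 0 \<Longrightarrow> f t \<ge> 0"
    and cont: "continuous_on {0<..} f"
    and M: "\<And>t. t > 0 \<Longrightarrow> \<bar>f t\<bar> \<le> M"
    and lam: "lam > 0" and x: "x > 0" and y: "y > 0"
  shows "integrable lborel (\<lambda>u. gQ y u * f (x * u))"
    and "integral\<^sup>L lborel (\<lambda>u. gQ y u * f (x * u)) \<ge> 0"
    and "(\<integral>\<^sup>+s. ennreal (1 / (y + x * s) powr (lam + y)) \<partial>\<omega>)
         = ennreal (x powr (- lam) * integral\<^sup>L lborel (\<lambda>u. gQ y u * f (x * u)) / Gamma (lam + y))"
proof -
  define J where "J = integral\<^sup>L lborel (\<lambda>u. gQ y u * f (x * u))"
  have meas[measurable]: "(\<lambda>u. gQ y u * f (x * u)) \<in> borel_measurable borel"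
    by (rule meas_gQf[OF cont x])
  have i0: "integrable lborel (\<lambda>u. gQ y u * u powr 0)" using moment(1)[of y 0] y by simp
  then have i0': "integrable lborel (\<lambda>u. \<bar>M\<bar> * gQ y u)"
    unfolding gQ_powr0 by simp
  show int: "integrable lborel (\<lambda>u. gQ y u * f (x * u))"
  proof (rule Bochner_Integration.integrable_bound[OF i0'])
    show "(\<lambda>u. gQ y u * f (x * u)) \<in> borel_measurable lborel" by simp
    show "AE u in lborel. norm (gQ y u * f (x * u)) \<le> norm (\<bar>M\<bar> * gQ y u)"
    proof (intro AE_I2)
      fix u :: real
      show "norm (gQ y u * f (x * u)) \<le> norm (\<bar>M\<bar> * gQ y u)"
      proof (cases "u > 0")
        case True
        then have "\<bar>f (x * u)\<bar> \<le> \<bar>M\<bar>" using M[of "x*u"] x by simp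
        then have "gQ y u * \<bar>f (x * u)\<bar> \<le> \<bar>M\<bar> * gQ y u"
          using gQ_nonneg[of y u] by (metis mult.commute mult_left_mono)
        then show ?thesis using gQ_nonneg[of y u] by (simp add: abs_mult)
      qed (simp add: gQ_zero)
    qed
  qed
  have pw: "\<And>u. gQ y u * f (x * u) \<ge> 0"
  proof -
    fix u :: real show "gQ y u * f (x * u) \<ge> 0"
      by (cases "u > 0") (use gQ_nonneg[of y u] fnn[of "x*u"] x in \<open>auto simp: gQ_zero\<close>)
  qed
  show J0: "integral\<^sup>L lborel (\<lambda>u. gQ y u * f (x * u)) \<ge> 0"
    by (rule integral_nonneg_AE) (simp add: pw)
  have a: "lam + y > 0" using lam y by simp
  have "ennreal (Gamma (lam + y)) * (\<integral>\<^sup>+s. ennreal (1 / (y + x * s) powr (lam + y)) \<partial>\<omega>)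
      = (\<integral>\<^sup>+u. ennreal (indicator {0<..} u * u powr (lam + y - 1) * exp (- (y * u)))
              * (\<integral>\<^sup>+s. ennreal (exp (- (x * u) * s)) \<partial>\<omega>) \<partial>lborel)"
    by (rule tonelli_step[OF sets nonneg sf a y x])
  also have "\<dots> = (\<integral>\<^sup>+u. ennreal (x powr (- lam) * (gQ y u * f (x * u))) \<partial>lborel)"
  proof (rule nn_integral_cong)
    fix u :: real
    show "ennreal (indicator {0<..} u * u powr (lam + y - 1) * exp (- (y * u)))
              * (\<integral>\<^sup>+s. ennreal (exp (- (x * u) * s)) \<partial>\<omega>) = ennreal (x powr (- lam) * (gQ y u * f (x * u)))"
    proof (cases "u > 0")
      case True
      have xu: "x * u > 0" using x True by simp
      have Lx: "(\<integral>\<^sup>+s. ennreal (exp (- (x * u) * s)) \<partial>\<omega>) = ennreal ((x * u) powr (- lam) * f (x * u))"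
        using laplace[OF xu] by simp
      have R: "u powr (lam + y - 1) * exp (- (y * u)) * ((x * u) powr (- lam) * f (x * u))
          = x powr (- lam) * (gQ y u * f (x * u))"
      proof -
        have "u powr (lam + y - 1) = u powr (y - 1) * u powr lam"
          by (simp add: powr_add[symmetric] algebra_simps)
        moreover have "(x * u) powr (- lam) = x powr (- lam) * u powr (- lam)"
          using x True by (simp add: powr_mult)
        moreover have "u powr lam * u powr (- lam) = 1"
          using True by (simp add: powr_add[symmetric])
        ultimately show ?thesis using True unfolding gQ_def
          by (simp add: mult_ac)
      qed
      have nn1: "(x * u) powr (- lam) * f (x * u) \<ge> 0" using fnn[OF xu] by simp
      have nn2: "u powr (lam + y - 1) * exp (- (y * u)) \<ge> 0" by simp
      have "ennreal (indicator {0<..} u * u powr (lam + y - 1) * exp (- (y * u)))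
              * (\<integral>\<^sup>+s. ennreal (exp (- (x * u) * s)) \<partial>\<omega>)
          = ennreal (u powr (lam + y - 1) * exp (- (y * u))) * ennreal ((x * u) powr (- lam) * f (x * u))"
        unfolding Lx using True by (simp add: indicator_def)
      also have "\<dots> = ennreal (u powr (lam + y - 1) * exp (- (y * u)) * ((x * u) powr (- lam) * f (x * u)))"
        by (rule ennreal_mult'[symmetric, OF nn2])
      also have "\<dots> = ennreal (x powr (- lam) * (gQ y u * f (x * u)))"
        by (simp only: R)
      finally show ?thesis .
    next
      case False
      then show ?thesis by (simp add: gQ_zero indicator_def)
    qed
  qed
  also have "\<dots> = ennreal (x powr (- lam) * J)"
  proof -
    have "integrable lborel (\<lambda>u. x powr (- lam) * (gQ y u * f (x * u)))"
      using int by simp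
    then have "(\<integral>\<^sup>+u. ennreal (x powr (- lam) * (gQ y u * f (x * u))) \<partial>lborel)
        = ennreal (integral\<^sup>L lborel (\<lambda>u. x powr (- lam) * (gQ y u * f (x * u))))"
      by (rule nn_integral_eq_integral) (simp add: pw)
    then show ?thesis by (simp add: J_def)
  qed
  finally have eq: "ennreal (Gamma (lam + y)) * (\<integral>\<^sup>+s. ennreal (1 / (y + x * s) powr (lam + y)) \<partial>\<omega>)
      = ennreal (x powr (- lam) * J)" .
  have gp: "Gamma (lam + y) > 0" using Gamma_real_pos[OF a] .
  have "(\<integral>\<^sup>+s. ennreal (1 / (y + x * s) powr (lam + y)) \<partial>\<omega>)
      = (ennreal (1 / Gamma (lam + y)) * ennreal (Gamma (lam + y))) * (\<integral>\<^sup>+s. ennreal (1 / (y + x * s) powr (lam + y)) \<partial>\<omega>)"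
    using gp by (simp add: ennreal_mult'[symmetric])
  also have "\<dots> = ennreal (1 / Gamma (lam + y)) * ennreal (x powr (- lam) * J)"
    by (simp only: mult.assoc eq)
  also have "\<dots> = ennreal (x powr (- lam) * J / Gamma (lam + y))"
    using gp J0 unfolding J_def by (simp add: ennreal_mult'[symmetric])
  finally show "(\<integral>\<^sup>+s. ennreal (1 / (y + x * s) powr (lam + y)) \<partial>\<omega>)
         = ennreal (x powr (- lam) * integral\<^sup>L lborel (\<lambda>u. gQ y u * f (x * u)) / Gamma (lam + y))"
    unfolding J_def .
qed

lemma case_le1:
  fixes f g :: "real \<Rightarrow> real" and lam x y M :: real
  assumes lam: "lam > 0" "lam \<le> 1" and x: "x > 0" and y: "y > 0"
    and fnn: "\<And>t. t > 0 \<Longrightarrow> f t \<ge> 0"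
    and Df: "\<And>t. t > 0 \<Longrightarrow> (f has_real_derivative deriv f t) (at t)"
    and fg: "\<And>t. t > 0 \<Longrightarrow> deriv f t = g t * t powr (lam - 1)"
    and gnn: "\<And>t. t > 0 \<Longrightarrow> g t \<ge> 0"
    and ganti: "\<And>s t. 0 < s \<Longrightarrow> s \<le> t \<Longrightarrow> g t \<le> g s"
    and M: "\<And>t. t > 0 \<Longrightarrow> \<bar>f t\<bar> \<le> M"
    and nonconst: "\<not> (\<exists>c. \<forall>t>0. f t = c)"
    and int: "integrable lborel (\<lambda>u. gQ y u * f (x * u))"
  shows "integral\<^sup>L lborel (\<lambda>u. gQ y u * f (x * u)) < f x * (Gamma y / y powr y)"
proof -
  define D where "D = deriv f x"
  define \<phi> where "\<phi> = (\<lambda>t. f t - D * t)"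
  have D0: "D \<ge> 0" using fg[OF x] gnn[OF x] by (simp add: D_def)
  have dphi: "(\<phi> has_real_derivative (deriv f t - D)) (at t)" if "t > 0" for t
    unfolding \<phi>_def using Df[OF that] by (auto intro!: derivative_eq_intros)
  have L: "deriv f t - D \<ge> 0" if "0 < t" "t \<le> x" for t
  proof -
    have "g x * x powr (lam - 1) \<le> g t * t powr (lam - 1)"
      by (rule mult_mono) (use that ganti gnn powr_mono2'[of "lam - 1" t x] lam in auto)
    then show ?thesis using fg[OF x] fg[of t] that by (simp add: D_def)
  qed
  have R: "deriv f t - D \<le> 0" if "x \<le> t" for t
  proof -
    have t: "t > 0" using that x by simp
    have "g t * t powr (lam - 1) \<le> g x * x powr (lam - 1)"
      by (rule mult_mono) (use that t x ganti gnn powr_mono2'[of "lam - 1" x t] lam in auto)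
    then show ?thesis using fg[OF x] fg[OF t] by (simp add: D_def)
  qed
  have pmax: "\<phi> t \<le> \<phi> x" if "t > 0" for t
    by (rule peak_max[of x \<phi> "\<lambda>t. deriv f t - D", OF x dphi L R that])
  have nc: "\<exists>t0>0. \<phi> t0 \<noteq> \<phi> x"
  proof (rule ccontr)
    assume "\<not> (\<exists>t0>0. \<phi> t0 \<noteq> \<phi> x)"
    then have eq: "\<And>t. t > 0 \<Longrightarrow> f t = \<phi> x + D * t" by (auto simp: \<phi>_def)
    show False
    proof (cases "D = 0")
      case True then show False using eq nonconst by auto
    next
      case False
      then have Dp: "D > 0" using D0 by simp
      define t where "t = max 1 ((M - \<phi> x + 1) / D)"
      have t: "t > 0" by (simp add: t_def)
      have "D * t \<ge> M - \<phi> x + 1"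
      proof -
        have "(M - \<phi> x + 1) / D \<le> t" by (simp add: t_def)
        then show ?thesis using Dp by (simp add: field_simps)
      qed
      then have "f t \<ge> M + 1" using eq[OF t] by simp
      then show False using M[OF t] by simp
    qed
  qed
  obtain p q where pq: "0 < p" "p < q" and strict: "\<And>u. p \<le> u \<Longrightarrow> u \<le> q \<Longrightarrow> \<phi> (x * u) < \<phi> x"
    using strict_set[of x \<phi>, OF x] peak_left[of \<phi> "\<lambda>t. deriv f t - D" x, OF dphi L]
      peak_right[of x \<phi> "\<lambda>t. deriv f t - D", OF x dphi R] nc by metis
  define G where "G = Gamma y / y powr y"
  have i0: "integrable lborel (gQ y)" and v0: "integral\<^sup>L lborel (gQ y) = G"
  proof -
    have m0: "integrable lborel (\<lambda>u. gQ y u * u powr 0)" "integral\<^sup>L lborel (\<lambda>u. gQ y u * u powr 0) = Gamma y / y powr y"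
    proof -
      have yr: "y + 0 > 0" using y by simp
      show "integrable lborel (\<lambda>u. gQ y u * u powr 0)" "integral\<^sup>L lborel (\<lambda>u. gQ y u * u powr 0) = Gamma y / y powr y"
        using moment[OF y yr] unfolding add_0_right .
    qed
    show "integrable lborel (gQ y)" "integral\<^sup>L lborel (gQ y) = G"
      using m0 unfolding gQ_powr0 G_def by simp_all
  qed
  have i1: "integrable lborel (\<lambda>u. gQ y u * u)" and v1: "integral\<^sup>L lborel (\<lambda>u. gQ y u * u) = G"
  proof -
    have "Gamma (y + 1) / y powr (y + 1) = G"
    proof -
      have "y \<notin> \<int>\<^sub>\<le>\<^sub>0" using y by (auto elim!: nonpos_Ints_cases)
      then have "Gamma (y + 1) = y * Gamma y" by (rule Gamma_plus1)
      then show ?thesis using y by (simp add: G_def powr_add)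
    qed
    then show "integrable lborel (\<lambda>u. gQ y u * u)" "integral\<^sup>L lborel (\<lambda>u. gQ y u * u) = G"
    proof -
      have m1: "integrable lborel (\<lambda>u. gQ y u * u powr 1)" "integral\<^sup>L lborel (\<lambda>u. gQ y u * u powr 1) = Gamma (y + 1) / y powr (y + 1)"
      proof -
        have yr: "y + 1 > 0" using y by simp
        show "integrable lborel (\<lambda>u. gQ y u * u powr 1)" "integral\<^sup>L lborel (\<lambda>u. gQ y u * u powr 1) = Gamma (y + 1) / y powr (y + 1)"
          using moment[OF y yr] .
      qed
      show "integrable lborel (\<lambda>u. gQ y u * u)" "integral\<^sup>L lborel (\<lambda>u. gQ y u * u) = G"
        using m1 \<open>Gamma (y + 1) / y powr (y + 1) = G\<close> unfolding gQ_powr1 by simp_all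
    qed
  qed
  define Y where "Y = (\<lambda>u. gQ y u * (f x - D * x) + D * x * (gQ y u * u))"
  have iY: "integrable lborel Y" unfolding Y_def using i0 i1 by simp
  have vY: "integral\<^sup>L lborel Y = f x * G"
  proof -
    have "integral\<^sup>L lborel Y = integral\<^sup>L lborel (\<lambda>u. gQ y u * (f x - D * x)) + integral\<^sup>L lborel (\<lambda>u. D * x * (gQ y u * u))"
      unfolding Y_def by (rule Bochner_Integration.integral_add) (use i0 i1 in auto)
    also have "\<dots> = G * (f x - D * x) + D * x * G"
      using v0 v1 by simp
    finally show ?thesis by (simp add: algebra_simps)
  qed
  have le: "gQ y u * f (x * u) \<le> Y u" for u
  proof (cases "u > 0")
    case True
    have "f (x * u) \<le> (f x - D * x) + D * x * u"
      using pmax[of "x * u"] True x by (simp add: \<phi>_def algebra_simps)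
    then have "gQ y u * f (x * u) \<le> gQ y u * ((f x - D * x) + D * x * u)"
      using gQ_nonneg[of y u] by (rule mult_left_mono)
    then show ?thesis by (simp add: Y_def algebra_simps)
  qed (simp add: Y_def gQ_zero)
  have lt: "gQ y u * f (x * u) < Y u" if "u \<in> {p..q}" for u
  proof -
    have u: "u > 0" using that pq by simp
    have "f (x * u) < (f x - D * x) + D * x * u"
      using strict[of u] that by (simp add: \<phi>_def algebra_simps)
    then have "gQ y u * f (x * u) < gQ y u * ((f x - D * x) + D * x * u)"
      using gQ_pos[OF u, of y] by (intro mult_strict_left_mono)
    then show ?thesis by (simp add: Y_def algebra_simps)
  qed
  have "integral\<^sup>L lborel (\<lambda>u. gQ y u * f (x * u)) < integral\<^sup>L lborel Y"
  proof (rule integral_less_gen[OF int iY, of "{p..q}"])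
    show "emeasure lborel {p..q} \<noteq> 0" using pq by simp
    show "{p..q} \<in> sets lborel" by simp
    show "AE u in lborel. u \<in> {p..q} \<longrightarrow> gQ y u * f (x * u) \<noteq> Y u"
      using lt by (intro AE_I2) (metis order_less_irrefl)
    show "AE u in lborel. gQ y u * f (x * u) \<le> Y u" using le by simp
  qed
  then show ?thesis using vY by (simp add: G_def)
qed

lemma bernoulli_powr:
  fixes lam u :: real
  assumes lam: "lam \<ge> 1" and u: "u > 0"
  shows "1 + lam * (u - 1) \<le> u powr lam"
proof -
  define \<psi> where "\<psi> = (\<lambda>u::real. lam * u - u powr lam)"
  have d: "(\<psi> has_real_derivative (lam - lam * u powr (lam - 1))) (at u)" if "u > 0" for u
  proof -
    have "((\<lambda>u. lam * u) has_real_derivative lam) (at u)"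
      using DERIV_cmult[OF DERIV_ident, of lam] by simp
    from DERIV_diff[OF this has_real_derivative_powr[OF that, of lam]] show ?thesis
      by (simp add: \<psi>_def)
  qed
  have L: "lam - lam * t powr (lam - 1) \<ge> 0" if "0 < t" "t \<le> 1" for t
  proof -
    have "t powr (lam - 1) \<le> 1" using that lam by (intro powr_le1) auto
    then show ?thesis using lam by (simp add: mult_left_le)
  qed
  have R: "lam - lam * t powr (lam - 1) \<le> 0" if "1 \<le> t" for t
  proof -
    have "1 \<le> t powr (lam - 1)" using that lam by (intro ge_one_powr_ge_zero) auto
    then show ?thesis using lam by (simp add: mult_le_cancel_left1)
  qed
  have "\<psi> u \<le> \<psi> 1"
    by (rule peak_max[of 1 \<psi> "\<lambda>t. lam - lam * t powr (lam - 1)", OF _ d L R u]) auto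
  then show ?thesis by (simp add: \<psi>_def algebra_simps)
qed

lemma case_gt1:
  fixes f g :: "real \<Rightarrow> real" and lam x y M :: real
  assumes lam: "lam > 1" and x: "x > 0" and y: "y > 0"
    and fnn: "\<And>t. t > 0 \<Longrightarrow> f t \<ge> 0"
    and Df: "\<And>t. t > 0 \<Longrightarrow> (f has_real_derivative deriv f t) (at t)"
    and fg: "\<And>t. t > 0 \<Longrightarrow> deriv f t = g t * t powr (lam - 1)"
    and gnn: "\<And>t. t > 0 \<Longrightarrow> g t \<ge> 0"
    and ganti: "\<And>s t. 0 < s \<Longrightarrow> s \<le> t \<Longrightarrow> g t \<le> g s"
    and M: "\<And>t. t > 0 \<Longrightarrow> \<bar>f t\<bar> \<le> M"
    and nonconst: "\<not> (\<exists>c. \<forall>t>0. f t = c)"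
    and int: "integrable lborel (\<lambda>u. gQ y u * f (x * u))"
  shows "y powr (lam + y) * integral\<^sup>L lborel (\<lambda>u. gQ y u * f (x * u)) < Gamma (lam + y) * f x"
proof -
  define K' where "K' = g x / lam"
  define \<phi> where "\<phi> = (\<lambda>t. f t - K' * t powr lam)"
  define \<phi>' where "\<phi>' = (\<lambda>t. deriv f t - K' * (lam * t powr (lam - 1)))"
  have K'0: "K' \<ge> 0" using gnn[OF x] lam by (simp add: K'_def)
  have dphi: "(\<phi> has_real_derivative \<phi>' t) (at t)" if "t > 0" for t
    unfolding \<phi>_def \<phi>'_def
    by (rule DERIV_diff[OF Df[OF that] DERIV_cmult[OF has_real_derivative_powr[OF that]]])
  have phi'_eq: "\<phi>' t = t powr (lam - 1) * (g t - g x)" if "t > 0" for t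
    using fg[OF that] lam by (simp add: \<phi>'_def K'_def algebra_simps)
  have L: "\<phi>' t \<ge> 0" if "0 < t" "t \<le> x" for t
    using phi'_eq[of t] that ganti[of t x] by simp
  have R: "\<phi>' t \<le> 0" if "x \<le> t" for t
  proof -
    have t: "t > 0" using that x by simp
    have "g t - g x \<le> 0" using ganti[OF x that] by simp
    then show ?thesis using phi'_eq[OF t] by (simp add: mult_nonneg_nonpos)
  qed
  have pmax: "\<phi> t \<le> \<phi> x" if "t > 0" for t
    by (rule peak_max[of x \<phi> \<phi>', OF x dphi L R that])
  have nc: "\<exists>t0>0. \<phi> t0 \<noteq> \<phi> x"
  proof (rule ccontr)
    assume "\<not> (\<exists>t0>0. \<phi> t0 \<noteq> \<phi> x)"
    then have eq: "\<And>t. t > 0 \<Longrightarrow> f t = \<phi> x + K' * t powr lam" by (auto simp: \<phi>_def)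
    show False
    proof (cases "K' = 0")
      case True then show False using eq nonconst by auto
    next
      case False
      then have Kp: "K' > 0" using K'0 by simp
      define t where "t = max 1 ((M - \<phi> x + 1) / K')"
      have t1: "t \<ge> 1" by (simp add: t_def)
      then have t: "t > 0" by simp
      have "K' * t \<ge> M - \<phi> x + 1"
      proof -
        have "(M - \<phi> x + 1) / K' \<le> t" by (simp add: t_def)
        then show ?thesis using Kp by (simp add: field_simps)
      qed
      moreover have "t \<le> t powr lam"
      proof -
        have "t powr 1 \<le> t powr lam" using t1 lam by (intro powr_mono) auto
        then show ?thesis using t by simp
      qed
      then have "K' * t \<le> K' * t powr lam" using K'0 by (rule mult_left_mono)
      ultimately have "f t \<ge> M + 1" using eq[OF t] by simp
      then show False using M[OF t] by simp
    qed
  qed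
  obtain p q where pq: "0 < p" "p < q" and strict: "\<And>u. p \<le> u \<Longrightarrow> u \<le> q \<Longrightarrow> \<phi> (x * u) < \<phi> x"
    using strict_set[of x \<phi>, OF x] peak_left[of \<phi> \<phi>' x, OF dphi L]
      peak_right[of x \<phi> \<phi>', OF x dphi R] nc by metis
  define K where "K = K' * x powr lam"
  have K0: "K \<ge> 0" using K'0 by (simp add: K_def)
  have Kf: "K \<le> f x"
  proof (rule ccontr)
    assume "\<not> K \<le> f x"
    then have neg: "\<phi> x < 0" by (simp add: \<phi>_def K_def)
    define t where "t = min (min 1 x) (- \<phi> x / (K' + 1))"
    have "- \<phi> x / (K' + 1) > 0" using neg K'0 by (intro divide_pos_pos) auto
    then have t0: "t > 0" using x by (simp add: t_def)
    have t1: "t \<le> 1" "t \<le> x" by (simp_all add: t_def)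
    have t2: "t \<le> - \<phi> x / (K' + 1)" by (simp add: t_def)
    have "t powr lam \<le> t powr 1" using t0 t1 lam by (intro powr_mono') auto
    then have tp: "t powr lam \<le> t" using t0 by simp
    have "\<phi> t \<le> \<phi> x" by (rule pmax[OF t0])
    moreover have "\<phi> t \<ge> - K' * t"
    proof -
      have "K' * t powr lam \<le> K' * t" using tp K'0 by (rule mult_left_mono)
      then show ?thesis using fnn[OF t0] by (simp add: \<phi>_def)
    qed
    moreover have "K' * t < - \<phi> x"
    proof -
      have "(K' + 1) * t \<le> - \<phi> x" using t2 K'0 by (simp add: field_simps)
      then show ?thesis using t0 by (simp add: algebra_simps)
    qed
    ultimately show False by simp
  qed
  define G where "G = Gamma y / y powr y"
  define H where "H = Gamma (y + lam) / y powr (y + lam)"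
  have i0: "integrable lborel (gQ y)" and v0: "integral\<^sup>L lborel (gQ y) = G"
  proof -
    have m0: "integrable lborel (\<lambda>u. gQ y u * u powr 0)" "integral\<^sup>L lborel (\<lambda>u. gQ y u * u powr 0) = Gamma y / y powr y"
    proof -
      have yr: "y + 0 > 0" using y by simp
      show "integrable lborel (\<lambda>u. gQ y u * u powr 0)" "integral\<^sup>L lborel (\<lambda>u. gQ y u * u powr 0) = Gamma y / y powr y"
        using moment[OF y yr] unfolding add_0_right .
    qed
    show "integrable lborel (gQ y)" "integral\<^sup>L lborel (gQ y) = G"
      using m0 unfolding gQ_powr0 G_def by simp_all
  qed
  have i1: "integrable lborel (\<lambda>u. gQ y u * u)" and v1: "integral\<^sup>L lborel (\<lambda>u. gQ y u * u) = G"
  proof -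
    have "Gamma (y + 1) / y powr (y + 1) = G"
    proof -
      have "y \<notin> \<int>\<^sub>\<le>\<^sub>0" using y by (auto elim!: nonpos_Ints_cases)
      then have "Gamma (y + 1) = y * Gamma y" by (rule Gamma_plus1)
      then show ?thesis using y by (simp add: G_def powr_add)
    qed
    then show "integrable lborel (\<lambda>u. gQ y u * u)" "integral\<^sup>L lborel (\<lambda>u. gQ y u * u) = G"
    proof -
      have m1: "integrable lborel (\<lambda>u. gQ y u * u powr 1)" "integral\<^sup>L lborel (\<lambda>u. gQ y u * u powr 1) = Gamma (y + 1) / y powr (y + 1)"
      proof -
        have yr: "y + 1 > 0" using y by simp
        show "integrable lborel (\<lambda>u. gQ y u * u powr 1)" "integral\<^sup>L lborel (\<lambda>u. gQ y u * u powr 1) = Gamma (y + 1) / y powr (y + 1)"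
          using moment[OF y yr] .
      qed
      show "integrable lborel (\<lambda>u. gQ y u * u)" "integral\<^sup>L lborel (\<lambda>u. gQ y u * u) = G"
        using m1 \<open>Gamma (y + 1) / y powr (y + 1) = G\<close> unfolding gQ_powr1 by simp_all
    qed
  qed
  have iL: "integrable lborel (\<lambda>u. gQ y u * u powr lam)" and vL: "integral\<^sup>L lborel (\<lambda>u. gQ y u * u powr lam) = H"
  proof -
    have yr: "y + lam > 0" using y lam by simp
    show "integrable lborel (\<lambda>u. gQ y u * u powr lam)" "integral\<^sup>L lborel (\<lambda>u. gQ y u * u powr lam) = H"
      using moment[OF y yr] unfolding H_def .
  qed
  have GH: "G \<le> H"
  proof -
    have "integral\<^sup>L lborel (\<lambda>u. gQ y u * (1 - lam) + lam * (gQ y u * u)) \<le> integral\<^sup>L lborel (\<lambda>u. gQ y u * u powr lam)"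
    proof (rule integral_mono)
      show "integrable lborel (\<lambda>u. gQ y u * (1 - lam) + lam * (gQ y u * u))" using i0 i1 by simp
      show "integrable lborel (\<lambda>u. gQ y u * u powr lam)" by (rule iL)
      fix u :: real
      show "gQ y u * (1 - lam) + lam * (gQ y u * u) \<le> gQ y u * u powr lam"
      proof (cases "u > 0")
        case True
        have "1 + lam * (u - 1) \<le> u powr lam" using bernoulli_powr[of lam u] lam True by simp
        then have "gQ y u * (1 + lam * (u - 1)) \<le> gQ y u * u powr lam"
          using gQ_nonneg[of y u] by (rule mult_left_mono)
        then show ?thesis by (simp add: algebra_simps)
      qed (simp add: gQ_zero)
    qed
    moreover have "integral\<^sup>L lborel (\<lambda>u. gQ y u * (1 - lam) + lam * (gQ y u * u)) = G"
    proof -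
      have "integral\<^sup>L lborel (\<lambda>u. gQ y u * (1 - lam) + lam * (gQ y u * u))
          = integral\<^sup>L lborel (\<lambda>u. gQ y u * (1 - lam)) + integral\<^sup>L lborel (\<lambda>u. lam * (gQ y u * u))"
        by (rule Bochner_Integration.integral_add) (use i0 i1 in auto)
      also have "\<dots> = G * (1 - lam) + lam * G" using v0 v1 by simp
      finally show ?thesis by (simp add: algebra_simps)
    qed
    ultimately show ?thesis using vL by simp
  qed
  define Y where "Y = (\<lambda>u. gQ y u * (f x - K) + K * (gQ y u * u powr lam))"
  have iY: "integrable lborel Y" unfolding Y_def using i0 iL by simp
  have vY: "integral\<^sup>L lborel Y = G * (f x - K) + K * H"
  proof -
    have "integral\<^sup>L lborel Y = integral\<^sup>L lborel (\<lambda>u. gQ y u * (f x - K)) + integral\<^sup>L lborel (\<lambda>u. K * (gQ y u * u powr lam))"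
      unfolding Y_def by (rule Bochner_Integration.integral_add) (use i0 iL in auto)
    also have "\<dots> = G * (f x - K) + K * H"
      using v0 vL by simp
    finally show ?thesis .
  qed
  have bound: "f (x * u) \<le> (f x - K) + K * u powr lam" if u: "u > 0" for u
  proof -
    have "\<phi> (x * u) \<le> \<phi> x" using pmax[of "x * u"] u x by simp
    moreover have "(x * u) powr lam = x powr lam * u powr lam" using x u by (simp add: powr_mult)
    ultimately show ?thesis by (simp add: \<phi>_def K_def algebra_simps)
  qed
  have sbound: "f (x * u) < (f x - K) + K * u powr lam" if u: "p \<le> u" "u \<le> q" for u
  proof -
    have up: "u > 0" using u pq by simp
    have "\<phi> (x * u) < \<phi> x" using strict[OF u] .
    moreover have "(x * u) powr lam = x powr lam * u powr lam" using x up by (simp add: powr_mult)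
    ultimately show ?thesis by (simp add: \<phi>_def K_def algebra_simps)
  qed
  have le: "gQ y u * f (x * u) \<le> Y u" for u
  proof (cases "u > 0")
    case True
    have "gQ y u * f (x * u) \<le> gQ y u * ((f x - K) + K * u powr lam)"
      using bound[OF True] gQ_nonneg[of y u] by (rule mult_left_mono)
    then show ?thesis by (simp add: Y_def algebra_simps)
  qed (simp add: Y_def gQ_zero)
  have lt: "gQ y u * f (x * u) < Y u" if "u \<in> {p..q}" for u
  proof -
    have u: "u > 0" using that pq by simp
    have "gQ y u * f (x * u) < gQ y u * ((f x - K) + K * u powr lam)"
      using sbound[of u] that gQ_pos[OF u, of y] by (intro mult_strict_left_mono) auto
    then show ?thesis by (simp add: Y_def algebra_simps)
  qed
  have Jlt: "integral\<^sup>L lborel (\<lambda>u. gQ y u * f (x * u)) < integral\<^sup>L lborel Y"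
  proof (rule integral_less_gen[OF int iY, of "{p..q}"])
    show "emeasure lborel {p..q} \<noteq> 0" using pq by simp
    show "{p..q} \<in> sets lborel" by simp
    show "AE u in lborel. u \<in> {p..q} \<longrightarrow> gQ y u * f (x * u) \<noteq> Y u"
      using lt by (intro AE_I2) (metis order_less_irrefl)
    show "AE u in lborel. gQ y u * f (x * u) \<le> Y u" using le by simp
  qed
  have "G * (f x - K) + K * H \<le> H * (f x - K) + K * H"
    using GH Kf by (intro add_right_mono mult_right_mono) auto
  then have Jlt2: "integral\<^sup>L lborel (\<lambda>u. gQ y u * f (x * u)) < H * f x"
    using Jlt vY by (simp add: algebra_simps)
  have ypos: "y powr (lam + y) > 0" using y by simp
  have "y powr (lam + y) * H = Gamma (lam + y)"
    using ypos by (simp add: H_def add.commute)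
  then show ?thesis
    using mult_strict_left_mono[OF Jlt2 ypos] by (simp add: mult.assoc[symmetric])
qed

theorem corollary2p5:
  fixes lam :: real and f :: "real \<Rightarrow> real" and \<omega> :: "real measure"
  assumes lam_pos: "lam > 0"
    and fB: "class_B lam f"
    and bdd: "\<exists>M. \<forall>x>0. \<bar>f x\<bar> \<le> M"
    and nonconst: "\<not> (\<exists>c. \<forall>x>0. f x = c)"
    and sets_\<omega>: "sets \<omega> = sets borel"
    and supp_\<omega>: "emeasure \<omega> {..<0} = 0"
    and laplace: "\<And>t. t > 0 \<Longrightarrow>
        ennreal (t powr (- lam) * f t) = (\<integral>\<^sup>+ s. ennreal (exp (- t * s)) \<partial>\<omega>)"
  shows "(lam \<le> 1 \<longrightarrow> (\<forall>x>0. \<forall>y>0.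
            ennreal (y powr y * Gamma (lam + y) / Gamma y) *
              (\<integral>\<^sup>+ s. ennreal (1 / (y + x * s) powr (lam + y)) \<partial>\<omega>)
            < (\<integral>\<^sup>+ s. ennreal (exp (- x * s)) \<partial>\<omega>)))
       \<and> (lam > 1 \<longrightarrow> (\<forall>x>0. \<forall>y>0.
            ennreal (y powr (lam + y)) *
              (\<integral>\<^sup>+ s. ennreal (1 / (y + x * s) powr (lam + y)) \<partial>\<omega>)
            < (\<integral>\<^sup>+ s. ennreal (exp (- x * s)) \<partial>\<omega>)))"
proof -
  define g where "g = (\<lambda>t. deriv f t * t powr (1 - lam))"
  have fnn: "\<And>t. t > 0 \<Longrightarrow> f t \<ge> 0" using class_B_facts(1)[OF fB] .
  have Df: "\<And>t. t > 0 \<Longrightarrow> (f has_real_derivative deriv f t) (at t)" using class_B_facts(2)[OF fB] .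
  have fg: "\<And>t. t > 0 \<Longrightarrow> deriv f t = g t * t powr (lam - 1)"
    using class_B_facts(3)[OF fB] unfolding g_def .
  have gnn: "\<And>t. t > 0 \<Longrightarrow> g t \<ge> 0" using class_B_facts(4)[OF fB] unfolding g_def .
  have ganti: "\<And>s t. 0 < s \<Longrightarrow> s \<le> t \<Longrightarrow> g t \<le> g s" using class_B_facts(5)[OF fB] unfolding g_def .
  obtain M where M0: "\<forall>x>0. \<bar>f x\<bar> \<le> M" using bdd by blast
  have M: "\<And>t. t > 0 \<Longrightarrow> \<bar>f t\<bar> \<le> M" using M0 by blast
  have cont: "continuous_on {0<..} f"
    by (rule continuous_at_imp_continuous_on) (auto intro: DERIV_isCont[OF Df])
  have nonneg: "AE s in \<omega>. s \<ge> 0"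
    by (rule AE_I[of _ _ "{..<0}"]) (auto simp: supp_\<omega> sets_\<omega>)
  have fin: "(\<integral>\<^sup>+s. ennreal (exp (- 1 * s)) \<partial>\<omega>) < \<infinity>"
  proof -
    have "(\<integral>\<^sup>+s. ennreal (exp (- 1 * s)) \<partial>\<omega>) = ennreal (1 powr (- lam) * f 1)"
      using laplace[of 1] by simp
    then show ?thesis by simp
  qed
  have sf: "sigma_finite_measure \<omega>" by (rule omega_sigma_finite[OF sets_\<omega> fin])
  have P1: "ennreal (y powr y * Gamma (lam + y) / Gamma y) *
              (\<integral>\<^sup>+ s. ennreal (1 / (y + x * s) powr (lam + y)) \<partial>\<omega>)
            < (\<integral>\<^sup>+ s. ennreal (exp (- x * s)) \<partial>\<omega>)"
    if lam1: "lam \<le> 1" and x: "x > 0" and y: "y > 0" for x y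
  proof -
    note IF = I_formula[OF sets_\<omega> nonneg sf laplace fnn cont M lam_pos x y]
    define J where "J = integral\<^sup>L lborel (\<lambda>u. gQ y u * f (x * u))"
    have J0: "J \<ge> 0" using IF(2) by (simp add: J_def)
    have Jlt: "J < f x * (Gamma y / y powr y)"
      unfolding J_def by (rule case_le1[OF lam_pos lam1 x y fnn Df fg gnn ganti M nonconst IF(1)])
    have a: "lam + y > 0" using lam_pos y by simp
    have ga: "Gamma (lam + y) > 0" using Gamma_real_pos[OF a] .
    have gy: "Gamma y > 0" using Gamma_real_pos[OF y] .
    have yy: "y powr y > 0" using y by simp
    have xl: "x powr (- lam) > 0" using x by simp
    have c0: "y powr y * Gamma (lam + y) / Gamma y \<ge> 0" using ga gy yy by simp
    have "ennreal (y powr y * Gamma (lam + y) / Gamma y) *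
              (\<integral>\<^sup>+ s. ennreal (1 / (y + x * s) powr (lam + y)) \<partial>\<omega>)
        = ennreal (y powr y * Gamma (lam + y) / Gamma y * (x powr (- lam) * J / Gamma (lam + y)))"
      using IF(3) c0 by (simp add: J_def ennreal_mult'[symmetric])
    also have "y powr y * Gamma (lam + y) / Gamma y * (x powr (- lam) * J / Gamma (lam + y))
        = x powr (- lam) * (J * (y powr y / Gamma y))"
      using ga by (simp add: field_simps)
    also have "ennreal (x powr (- lam) * (J * (y powr y / Gamma y))) < ennreal (x powr (- lam) * f x)"
    proof (rule ennreal_lessI)
      have "J * (y powr y / Gamma y) < f x * (Gamma y / y powr y) * (y powr y / Gamma y)"
        using Jlt yy gy by (intro mult_strict_right_mono) auto
      also have "\<dots> = f x" using yy gy by (simp add: field_simps)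
      finally have "J * (y powr y / Gamma y) < f x" .
      then show "x powr (- lam) * (J * (y powr y / Gamma y)) < x powr (- lam) * f x"
        using xl by (rule mult_strict_left_mono)
      then show "0 < x powr (- lam) * f x"
        using J0 yy gy xl by (smt (verit) divide_nonneg_pos mult_nonneg_nonneg)
    qed
    also have "ennreal (x powr (- lam) * f x) = (\<integral>\<^sup>+ s. ennreal (exp (- x * s)) \<partial>\<omega>)"
      by (rule laplace[OF x])
    finally show ?thesis .
  qed
  have P2: "ennreal (y powr (lam + y)) *
              (\<integral>\<^sup>+ s. ennreal (1 / (y + x * s) powr (lam + y)) \<partial>\<omega>)
            < (\<integral>\<^sup>+ s. ennreal (exp (- x * s)) \<partial>\<omega>)"
    if lam1: "lam > 1" and x: "x > 0" and y: "y > 0" for x y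
  proof -
    note IF = I_formula[OF sets_\<omega> nonneg sf laplace fnn cont M lam_pos x y]
    define J where "J = integral\<^sup>L lborel (\<lambda>u. gQ y u * f (x * u))"
    have J0: "J \<ge> 0" using IF(2) by (simp add: J_def)
    have Jlt: "y powr (lam + y) * J < Gamma (lam + y) * f x"
      unfolding J_def by (rule case_gt1[OF lam1 x y fnn Df fg gnn ganti M nonconst IF(1)])
    have a: "lam + y > 0" using lam_pos y by simp
    have ga: "Gamma (lam + y) > 0" using Gamma_real_pos[OF a] .
    have ya: "y powr (lam + y) > 0" using y by simp
    have xl: "x powr (- lam) > 0" using x by simp
    have "ennreal (y powr (lam + y)) *
              (\<integral>\<^sup>+ s. ennreal (1 / (y + x * s) powr (lam + y)) \<partial>\<omega>)
        = ennreal (y powr (lam + y) * (x powr (- lam) * J / Gamma (lam + y)))"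
      using IF(3) ya by (simp add: J_def ennreal_mult'[symmetric])
    also have "y powr (lam + y) * (x powr (- lam) * J / Gamma (lam + y))
        = x powr (- lam) * ((y powr (lam + y) * J) / Gamma (lam + y))"
      using ga by (simp add: field_simps)
    also have "ennreal (x powr (- lam) * ((y powr (lam + y) * J) / Gamma (lam + y))) < ennreal (x powr (- lam) * f x)"
    proof (rule ennreal_lessI)
      have "(y powr (lam + y) * J) / Gamma (lam + y) < (Gamma (lam + y) * f x) / Gamma (lam + y)"
        using Jlt ga by (intro divide_strict_right_mono) auto
      also have "\<dots> = f x" using ga by simp
      finally have lt: "(y powr (lam + y) * J) / Gamma (lam + y) < f x" .
      then show "x powr (- lam) * ((y powr (lam + y) * J) / Gamma (lam + y)) < x powr (- lam) * f x"
        using xl by (rule mult_strict_left_mono)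
      have "0 \<le> (y powr (lam + y) * J) / Gamma (lam + y)" using J0 ya ga by simp
      then have "f x > 0" using lt by linarith
      then show "0 < x powr (- lam) * f x" using xl by simp
    qed
    also have "ennreal (x powr (- lam) * f x) = (\<integral>\<^sup>+ s. ennreal (exp (- x * s)) \<partial>\<omega>)"
      by (rule laplace[OF x])
    finally show ?thesis .
  qed
  show ?thesis using P1 P2 by blast
qed

end
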